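(* Let $Z_t$ be an $\mathbb{R}^D$-valued random vector with density $f_{Z_t}$, let $V_t,U_t:\mathbb{R}^D\to\mathbb{R}$ be a value function and its approximation, and let $X_t=V_t(Z_t)^+$, $Y_t=U_t(Z_t)^+$. Let $m$ be a probability measure on $(0,1)$ with density $f_m$ and $\rho_m(X)=\int_0^1Q_X(u)\,m(du)$. Then for any $p=rq$ with $1\le r,q<\infty$, $\frac1r+\frac1{r'}=1$, $\frac1q+\frac1{q'}=1$, \[|\rho_m(X_t)-\rho_m(Y_t)|\le\Vert V_t-U_t\Vert_{L^p(\mathbb{R}^D)}\cdot\Vert f_{Z_t}\Vert_{L^{q'}(\mathbb{R}^D)}^{1/r}\cdot\Vert f_m\Vert_{L^{r'}(0,1)}.\]
   Context: $x^+=\max\{x,0\}$. For a random variable $X$ with distribution function $F_X$, the quantile function is $Q_X(u)=\inf\{x\in\mathbb{R}:F_X(x)\ge u\}$, $u\in(0,1)$. $L^p$ norms are with respect to Lebesgue measure. *)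

theory Defs
  imports "HOL-Probability.Probability"
begin

definition epowr :: "ennreal \<Rightarrow> real \<Rightarrow> ennreal" where
  "epowr x a = (if x = \<infinity> then \<infinity> else ennreal (enn2real x powr a))"

definition Lnorm :: "'b measure \<Rightarrow> ennreal \<Rightarrow> ('b \<Rightarrow> ennreal) \<Rightarrow> ennreal" where
  "Lnorm M p f =
     (if p = \<infinity> then Inf {c. AE x in M. f x \<le> c}
      else epowr (\<integral>\<^sup>+ x. epowr (f x) (enn2real p) \<partial>M) (1 / enn2real p))"

definition conj_exp :: "real \<Rightarrow> ennreal" where
  "conj_exp r = (if r = 1 then \<infinity> else ennreal (r / (r - 1)))"

definition quantile :: "'a measure \<Rightarrow> ('a \<Rightarrow> real) \<Rightarrow> real \<Rightarrow> real" where
  "quantile M X u = Inf {x. u \<le> cdf (distr M borel X) x}"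

definition rho :: "real measure \<Rightarrow> 'a measure \<Rightarrow> ('a \<Rightarrow> real) \<Rightarrow> real" where
  "rho m M X = (\<integral>u. quantile M X u \<partial>m)"

end

theory Submission
  imports Defs
begin

lemma epowr_ennreal: "0 \<le> x \<Longrightarrow> epowr (ennreal x) a = ennreal (x powr a)"
  by (simp add: epowr_def)

lemma epowr_top[simp]: "epowr top a = top"
  by (simp add: epowr_def)

lemma epowr_zero[simp]: "epowr 0 a = 0"
  by (simp add: epowr_def)

lemma epowr_1: "epowr x 1 = x"
  by (cases x) (auto simp: epowr_def)

lemma epowr_mono: "0 \<le> a \<Longrightarrow> x \<le> y \<Longrightarrow> epowr x a \<le> epowr y a"
proof (cases "y = \<infinity>")
  case False
  assume a: "0 \<le> a" and xy: "x \<le> y"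
  with False have "x \<noteq> \<infinity>" using top.extremum_unique by fastforce
  moreover have "enn2real x \<le> enn2real y" using xy False by (simp add: enn2real_mono top.not_eq_extremum)
  ultimately show ?thesis using False a
    by (simp add: epowr_def powr_mono2 ennreal_leI)
qed (simp add: epowr_def)

lemma epowr_mult_aux: "0 < a \<Longrightarrow> x \<noteq> \<infinity> \<Longrightarrow> epowr (x * \<infinity>) a = epowr x a * epowr \<infinity> a"
proof -
  assume a: "0 < a" and xt: "x \<noteq> \<infinity>"
  obtain r where x: "x = ennreal r" "0 \<le> r" using xt by (cases x) auto
  show ?thesis
  proof (cases "r = 0")
    case True then show ?thesis using x by (simp add: epowr_def)
  next
    case False
    then have "x * \<infinity> = \<infinity>" using x by (simp add: ennreal_mult_top)
    moreover have "epowr x a = ennreal (r powr a)" using x by (simp add: epowr_ennreal)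
    moreover have "r powr a > 0" using False x by simp
    ultimately show ?thesis by (simp add: epowr_def ennreal_mult_top)
  qed
qed
lemma epowr_mult: "0 < a \<Longrightarrow> epowr (x * y) a = epowr x a * epowr y a"
proof -
  assume a: "0 < a"
  show ?thesis
  proof (cases "x = \<infinity>")
    case True
    show ?thesis
    proof (cases "y = \<infinity>")
      case True then show ?thesis using \<open>x = \<infinity>\<close> by (simp add: epowr_def)
    next
      case False then show ?thesis using epowr_mult_aux[OF a False] \<open>x = \<infinity>\<close> by (simp add: mult.commute)
    qed
  next
    case xf: False
    show ?thesis
    proof (cases "y = \<infinity>")
      case True then show ?thesis using epowr_mult_aux[OF a xf] by simp
    next
      case False
      obtain r where x: "x = ennreal r" "0 \<le> r" using xf by (cases x) auto
      obtain s where y: "y = ennreal s" "0 \<le> s" using False by (cases y) auto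
      have "x * y = ennreal (r * s)" using x y by (simp add: ennreal_mult)
      then have "epowr (x * y) a = ennreal ((r * s) powr a)" using x y by (simp add: epowr_ennreal)
      also have "\<dots> = ennreal (r powr a) * ennreal (s powr a)" using x y by (simp add: powr_mult ennreal_mult)
      finally show ?thesis using x y by (simp add: epowr_ennreal)
    qed
  qed
qed
lemma epowr_epowr: "0 < a \<Longrightarrow> epowr (epowr x a) b = epowr x (a * b)"
  by (cases "x = \<infinity>") (simp_all add: epowr_def powr_powr)
lemma epowr_eq_0_iff: "epowr x a = 0 \<longleftrightarrow> x = 0"
  by (cases "x = \<infinity>") (auto simp: epowr_def enn2real_eq_0_iff)
lemma epowr_eq_top_iff: "epowr x a = \<infinity> \<longleftrightarrow> x = \<infinity>"
  by (simp add: epowr_def)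
lemma measurable_epowr[measurable]:
  assumes [measurable]: "f \<in> borel_measurable M"
  shows "(\<lambda>x. epowr (f x) a) \<in> borel_measurable M"
  unfolding epowr_def by measurable


lemma young_real:
  fixes x y p a b :: real
  assumes p: "1 < p" and a: "0 < a" and b: "0 < b" and x: "0 \<le> x" and y: "0 \<le> y"
  shows "x * y \<le> a * b / (p * a powr p) * x powr p + a * b * (1 - 1/p) / b powr (p/(p-1)) * y powr (p/(p-1))"
proof -
  define q where "q = p/(p-1)"
  have q: "q > 1" "1/p + 1/q = 1" using p by (auto simp: q_def field_simps)
  have Y: "(x/a) * (y/b) \<le> (x/a) powr p / p + (y/b) powr q / q"
    by (rule Youngs_inequality[OF p q(1) q(2)]) (use x y a b in auto)
  have "a * b * ((x/a) * (y/b)) \<le> a * b * ((x/a) powr p / p + (y/b) powr q / q)"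
    by (rule mult_left_mono[OF Y]) (use a b in simp)
  moreover have "a * b * ((x/a) * (y/b)) = x * y" using a b by simp
  moreover have "(x/a) powr p = x powr p / a powr p" using x a by (simp add: powr_divide)
  moreover have "(y/b) powr q = y powr q / b powr q" using y b by (simp add: powr_divide)
  ultimately have "x * y \<le> a * b * (x powr p / a powr p / p + y powr q / b powr q / q)" by simp
  also have "\<dots> = a * b / (p * a powr p) * x powr p + a * b * (1/q) / b powr q * y powr q"
    by (simp add: field_simps)
  also have "1/q = 1 - 1/p" using q by simp
  finally show ?thesis unfolding q_def .
qed

lemma young_enn:
  fixes x y :: ennreal and p a b :: real
  assumes p: "1 < p" and a: "0 < a" and b: "0 < b"
  shows "x * y \<le> ennreal (a * b / (p * a powr p)) * epowr x p
                 + ennreal (a * b * (1 - 1/p) / b powr (p/(p-1))) * epowr y (p/(p-1))"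
proof -
  define c1 where "c1 = a * b / (p * a powr p)"
  define c2 where "c2 = a * b * (1 - 1/p) / b powr (p/(p-1))"
  have c1: "c1 > 0" using p a b by (simp add: c1_def)
  have c2: "c2 > 0" using p a b by (simp add: c2_def)
  note defs = c1_def[symmetric] c2_def[symmetric]
  show ?thesis
  proof (cases "x = \<infinity> \<or> y = \<infinity>")
    case True
    then have "ennreal c1 * epowr x p + ennreal c2 * epowr y (p/(p-1)) = top"
      using c1 c2 by (auto simp: ennreal_mult_eq_top_iff)
    then show ?thesis unfolding defs by (metis top_greatest)
  next
    case False
    obtain r where x: "x = ennreal r" "0 \<le> r" using False by (cases x) auto
    obtain s where y: "y = ennreal s" "0 \<le> s" using False by (cases y) auto
    have "r * s \<le> a * b / (p * a powr p) * r powr p + a * b * (1 - 1/p) / b powr (p/(p-1)) * s powr (p/(p-1))"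
      using young_real[OF p a b x(2) y(2)] unfolding defs .
    then have "ennreal (r * s) \<le> ennreal (a * b / (p * a powr p) * r powr p + a * b * (1 - 1/p) / b powr (p/(p-1)) * s powr (p/(p-1)))"
      by (rule ennreal_leI)
    also have "\<dots> = ennreal (a * b / (p * a powr p)) * epowr x p
                 + ennreal (a * b * (1 - 1/p) / b powr (p/(p-1))) * epowr y (p/(p-1))"
      unfolding defs using x y c1 c2
      by (simp only: epowr_ennreal ennreal_plus[symmetric] ennreal_mult[symmetric] mult_nonneg_nonneg powr_ge_zero less_imp_le)
    finally show ?thesis using x y by (simp add: ennreal_mult)
  qed
qed



lemma nn_integral_zero_if_epowr:
  assumes [measurable]: "f \<in> borel_measurable M" "g \<in> borel_measurable M"
    and "(\<integral>\<^sup>+x. epowr (f x) p \<partial>M) = 0"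
  shows "(\<integral>\<^sup>+x. f x * g x \<partial>M) = 0"
proof -
  have "AE x in M. epowr (f x) p = 0" using assms(3) by (simp add: nn_integral_0_iff_AE)
  then have "AE x in M. f x * g x = 0" by (auto simp: epowr_eq_0_iff)
  then show ?thesis by (simp add: nn_integral_0_iff_AE)
qed

lemma holder_gt1:
  assumes [measurable]: "f \<in> borel_measurable M" "g \<in> borel_measurable M" and p: "1 < p"
  shows "(\<integral>\<^sup>+x. f x * g x \<partial>M)
     \<le> epowr (\<integral>\<^sup>+x. epowr (f x) p \<partial>M) (1/p) * epowr (\<integral>\<^sup>+x. epowr (g x) (p/(p-1)) \<partial>M) (1 - 1/p)"
    (is "?L \<le> epowr ?A _ * epowr ?B _")
proof -
  have p1: "0 < 1 - 1/p" using p by simp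
  consider "?A = 0" | "?B = 0" | "?A \<noteq> 0" "?B \<noteq> 0" "?A = top \<or> ?B = top"
    | "?A \<noteq> 0" "?B \<noteq> 0" "?A \<noteq> top" "?B \<noteq> top" by blast
  then show ?thesis
  proof cases
    case 1
    then have "?L = 0" by (intro nn_integral_zero_if_epowr) auto
    then show ?thesis by simp
  next
    case 2
    then have "(\<integral>\<^sup>+x. g x * f x \<partial>M) = 0" by (intro nn_integral_zero_if_epowr) auto
    then have "?L = 0" by (simp add: mult.commute)
    then show ?thesis by simp
  next
    case 3
    then have "epowr ?A (1/p) * epowr ?B (1 - 1/p) = top"
      by (auto simp: ennreal_mult_eq_top_iff epowr_eq_0_iff epowr_eq_top_iff)
    then show ?thesis by (metis top_greatest)
  next
    case 4
    define Ar where "Ar = enn2real ?A"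
    define Br where "Br = enn2real ?B"
    have A: "?A = ennreal Ar" "Ar > 0" using 4 by (auto simp: Ar_def enn2real_positive_iff top.not_eq_extremum ennreal_enn2real_if zero_less_iff_neq_zero)
    have B: "?B = ennreal Br" "Br > 0" using 4 by (auto simp: Br_def enn2real_positive_iff top.not_eq_extremum ennreal_enn2real_if zero_less_iff_neq_zero)
    define a where "a = Ar powr (1/p)"
    define b where "b = Br powr (1 - 1/p)"
    have a: "a > 0" "a powr p = Ar" using A p by (auto simp: a_def powr_powr)
    have "(1 - 1/p) * (p / (p - 1)) = 1" using p by (simp add: field_simps)
    then have b: "b > 0" "b powr (p/(p-1)) = Br" using B p by (auto simp: b_def powr_powr)
    define c1 where "c1 = a * b / (p * a powr p)"
    define c2 where "c2 = a * b * (1 - 1/p) / b powr (p/(p-1))"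
    have c: "c1 \<ge> 0" "c2 \<ge> 0" using a b p by (auto simp: c1_def c2_def)
    have "?L \<le> (\<integral>\<^sup>+x. ennreal c1 * epowr (f x) p + ennreal c2 * epowr (g x) (p/(p-1)) \<partial>M)"
      by (intro nn_integral_mono) (unfold c1_def c2_def, rule young_enn[OF p a(1) b(1)])
    also have "\<dots> = ennreal c1 * ?A + ennreal c2 * ?B"
      by (simp add: nn_integral_add nn_integral_cmult)
    also have "\<dots> = ennreal (c1 * Ar + c2 * Br)"
      using A B c by (simp add: ennreal_plus ennreal_mult)
    also have "c1 * Ar + c2 * Br = a * b"
      using a b p A(2) B(2) by (simp add: c1_def c2_def field_simps)
    also have "ennreal (a * b) = epowr ?A (1/p) * epowr ?B (1 - 1/p)"
      using A B a b by (simp add: epowr_ennreal a_def b_def ennreal_mult)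
    finally show ?thesis .
  qed
qed

lemma holder_1:
  assumes [measurable]: "f \<in> borel_measurable M" "g \<in> borel_measurable M"
  shows "(\<integral>\<^sup>+x. f x * g x \<partial>M) \<le> (\<integral>\<^sup>+x. f x \<partial>M) * Inf {c. AE x in M. g x \<le> c}"
proof -
  have e: "Inf {c. AE x in M. g x \<le> c} = esssup M g" by (simp add: esssup_eq_AE)
  have "AE x in M. f x * g x \<le> f x * esssup M g"
    using esssup_AE[of g M] by eventually_elim (simp add: mult_left_mono)
  then have "(\<integral>\<^sup>+x. f x * g x \<partial>M) \<le> (\<integral>\<^sup>+x. f x * esssup M g \<partial>M)"
    by (rule nn_integral_mono_AE)
  also have "\<dots> = (\<integral>\<^sup>+x. f x \<partial>M) * esssup M g"
    by (simp add: nn_integral_multc)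
  finally show ?thesis unfolding e .
qed

lemma holder_Lnorm:
  assumes [measurable]: "f \<in> borel_measurable M" "g \<in> borel_measurable M" and p: "1 \<le> p"
  shows "(\<integral>\<^sup>+x. f x * g x \<partial>M) \<le> Lnorm M (ennreal p) f * Lnorm M (conj_exp p) g"
proof (cases "p = 1")
  case True
  then show ?thesis using holder_1[OF assms(1,2)]
    by (simp add: Lnorm_def conj_exp_def epowr_1)
next
  case False
  then have p1: "1 < p" using p by simp
  have "1 / (p / (p - 1)) = 1 - 1/p" using p1 by (simp add: field_simps)
  moreover have "p / (p - 1) \<ge> 0" using p1 by simp
  ultimately show ?thesis using holder_gt1[OF assms(1,2) p1] p1
    by (simp add: Lnorm_def conj_exp_def)
qed



lemma galois_generic:
  fixes F :: "real \<Rightarrow> real"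
  assumes mono: "\<And>x y. x \<le> y \<Longrightarrow> F x \<le> F y"
    and rc: "\<And>x. continuous (at_right x) F"
    and bot: "(F \<longlongrightarrow> 0) at_bot" and top: "(F \<longlongrightarrow> 1) at_top"
    and u: "0 < u" "u < 1"
  shows "Inf {x. u \<le> F x} \<le> t \<longleftrightarrow> u \<le> F t"
proof -
  define S where "S = {x. u \<le> F x}"
  have "eventually (\<lambda>x. F x > u) at_top" using order_tendstoD(1)[OF top u(2)] .
  then obtain x1 where "\<And>x. x \<ge> x1 \<Longrightarrow> F x > u" by (auto simp: eventually_at_top_linorder)
  then have ne: "S \<noteq> {}" unfolding S_def by (metis less_imp_le mem_Collect_eq order_refl empty_iff)
  have "eventually (\<lambda>x. F x < u) at_bot" using order_tendstoD(2)[OF bot u(1)] .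
  then obtain x0 where x0: "\<And>x. x \<le> x0 \<Longrightarrow> F x < u" by (auto simp: eventually_at_bot_linorder)
  have bdd: "bdd_below S"
  proof
    fix s assume "s \<in> S"
    then have "u \<le> F s" by (simp add: S_def)
    then show "x0 \<le> s" using x0[of s] by (cases "s \<le> x0") auto
  qed
  show ?thesis
  proof
    assume "u \<le> F t"
    then have "t \<in> S" by (simp add: S_def)
    then show "Inf {x. u \<le> F x} \<le> t" unfolding S_def[symmetric] using bdd by (rule cInf_lower)
  next
    assume it: "Inf {x. u \<le> F x} \<le> t"
    define i where "i = Inf S"
    have "eventually (\<lambda>y. u \<le> F y) (at_right i)"
      unfolding eventually_at_right[OF less_add_one[of i]]
    proof (intro exI[of _ "i + 1"] conjI allI impI)
      fix y assume "i < y" "y < i + 1"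
      then have "Inf S < y" by (simp add: i_def)
      then obtain s where "s \<in> S" "s < y" using cInf_less_iff[OF ne bdd] by auto
      then show "u \<le> F y" using mono[of s y] by (auto simp: S_def)
    qed simp
    moreover have "(F \<longlongrightarrow> F i) (at_right i)" using rc[of i] by (simp add: continuous_within)
    ultimately have "u \<le> F i"
      by (intro tendsto_lowerbound[of F "F i" "at_right i" u]) (auto simp: trivial_limit_at_right_real)
    then show "u \<le> F t" using mono[of i t] it by (simp add: i_def S_def)
  qed
qed

lemma cdf_distr_props:
  assumes "prob_space M" and [measurable]: "X \<in> borel_measurable M"
  shows "\<And>x y. x \<le> y \<Longrightarrow> cdf (distr M borel X) x \<le> cdf (distr M borel X) y"
    and "\<And>x. continuous (at_right x) (cdf (distr M borel X))"
    and "(cdf (distr M borel X) \<longlongrightarrow> 0) at_bot"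
    and "(cdf (distr M borel X) \<longlongrightarrow> 1) at_top"
    and "\<And>x. 0 \<le> cdf (distr M borel X) x"
    and "\<And>x. cdf (distr M borel X) x \<le> 1"
    and "\<And>x. cdf (distr M borel X) x = measure M {\<omega>\<in>space M. X \<omega> \<le> x}"
proof -
  interpret prob_space M by fact
  interpret D: real_distribution "distr M borel X" by simp
  show "\<And>x y. x \<le> y \<Longrightarrow> cdf (distr M borel X) x \<le> cdf (distr M borel X) y"
    by (rule D.cdf_nondecreasing)
  show "\<And>x. continuous (at_right x) (cdf (distr M borel X))" by (rule D.cdf_is_right_cont)
  show "(cdf (distr M borel X) \<longlongrightarrow> 0) at_bot" by (rule D.cdf_lim_at_bot)
  show "(cdf (distr M borel X) \<longlongrightarrow> 1) at_top" by (rule D.cdf_lim_at_top_prob)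
  show "\<And>x. 0 \<le> cdf (distr M borel X) x" by (rule D.cdf_nonneg)
  show "\<And>x. cdf (distr M borel X) x \<le> 1" by (rule D.cdf_bounded_prob)
  show "\<And>x. cdf (distr M borel X) x = measure M {\<omega>\<in>space M. X \<omega> \<le> x}"
    by (simp add: cdf_def measure_distr vimage_def Int_def conj_commute)
qed

lemma quantile_le_iff:
  assumes "prob_space M" and [measurable]: "X \<in> borel_measurable M" and "0 < u" "u < 1"
  shows "quantile M X u \<le> t \<longleftrightarrow> u \<le> cdf (distr M borel X) t"
  unfolding quantile_def
  by (rule galois_generic[OF cdf_distr_props(1-4)[OF assms(1,2)] assms(3,4)]) auto

lemma quantile_mono_on:
  assumes "prob_space M" and [measurable]: "X \<in> borel_measurable M"
  shows "mono_on {0<..<1} (quantile M X)"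
proof (rule mono_onI)
  fix u v :: real assume u: "u \<in> {0<..<1}" and v: "v \<in> {0<..<1}" and uv: "u \<le> v"
  have "v \<le> cdf (distr M borel X) (quantile M X v)"
    using quantile_le_iff[OF assms, of v "quantile M X v"] v by simp
  then have "u \<le> cdf (distr M borel X) (quantile M X v)" using uv by simp
  then show "quantile M X u \<le> quantile M X v"
    using quantile_le_iff[OF assms, of u "quantile M X v"] u by simp
qed

abbreviation L01 :: "real measure" where "L01 \<equiv> restrict_space lborel {0<..<1}"

lemma quantile_measurable:
  assumes "prob_space M" and [measurable]: "X \<in> borel_measurable M"
  shows "quantile M X \<in> borel_measurable L01"
proof -
  have "quantile M X \<in> borel_measurable (restrict_space borel {0<..<1})"
    by (rule borel_measurable_mono_on_fnc[OF quantile_mono_on[OF assms]])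
  moreover have "sets L01 = sets (restrict_space borel {0<..<1::real})"
    by (simp add: sets_restrict_space)
  ultimately show ?thesis using measurable_cong_sets by blast
qed



lemma posdiff_integral:
  "ennreal (max (x - y - a) 0) = (\<integral>\<^sup>+t. (if y \<le> t - a \<and> t < x then 1 else 0) \<partial>lborel)"
proof -
  have "(\<integral>\<^sup>+t. (if y \<le> t - a \<and> t < x then 1 else 0) \<partial>lborel) = (\<integral>\<^sup>+t. indicator {y + a..<x} t \<partial>lborel)"
    by (intro nn_integral_cong) (auto simp: indicator_def)
  also have "\<dots> = emeasure lborel {y + a..<x}" by simp
  also have "\<dots> = ennreal (max (x - y - a) 0)"
    by (cases "y + a \<le> x") (auto simp: max_def)
  finally show ?thesis ..
qed

lemma L01_sigma_finite: "sigma_finite_measure L01"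
  by (rule sigma_finite_measure_restrict_space[OF sigma_finite_lborel]) simp

lemma emeasure_Ioc_cap01:
  fixes \<alpha> \<beta> :: real
  assumes "0 \<le> \<alpha>" "\<beta> \<le> 1"
  shows "emeasure lborel ({\<alpha><..\<beta>} \<inter> {0<..<1}) = ennreal (max (\<beta> - \<alpha>) 0)"
proof (cases "\<alpha> < \<beta>")
  case False
  then have "{\<alpha><..\<beta>} \<inter> {0<..<1} = {}" by auto
  then show ?thesis using False by (simp add: max_def)
next
  case True
  have "emeasure lborel ({\<alpha><..\<beta>} \<inter> {0<..<1}) \<le> emeasure lborel {\<alpha>..\<beta>}"
    by (rule emeasure_mono) auto
  moreover have "emeasure lborel {\<alpha><..<\<beta>} \<le> emeasure lborel ({\<alpha><..\<beta>} \<inter> {0<..<1})"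
    using assms by (intro emeasure_mono) auto
  ultimately show ?thesis using True by (simp add: max_def)
qed

lemma prob_lower:
  assumes "prob_space M" and [measurable]: "X \<in> borel_measurable M" "Y \<in> borel_measurable M"
  shows "ennreal (max (cdf (distr M borel Y) s - cdf (distr M borel X) t) 0)
    \<le> emeasure M {\<omega>\<in>space M. Y \<omega> \<le> s \<and> t < X \<omega>}"
proof -
  interpret prob_space M by fact
  have "{\<omega>\<in>space M. Y \<omega> \<le> s} \<subseteq> {\<omega>\<in>space M. Y \<omega> \<le> s \<and> t < X \<omega>} \<union> {\<omega>\<in>space M. X \<omega> \<le> t}"
    by auto
  then have "prob {\<omega>\<in>space M. Y \<omega> \<le> s} \<le> prob ({\<omega>\<in>space M. Y \<omega> \<le> s \<and> t < X \<omega>} \<union> {\<omega>\<in>space M. X \<omega> \<le> t})"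
    by (intro finite_measure_mono) auto
  also have "\<dots> \<le> prob {\<omega>\<in>space M. Y \<omega> \<le> s \<and> t < X \<omega>} + prob {\<omega>\<in>space M. X \<omega> \<le> t}"
    by (intro measure_subadditive) auto
  finally have "cdf (distr M borel Y) s - cdf (distr M borel X) t \<le> prob {\<omega>\<in>space M. Y \<omega> \<le> s \<and> t < X \<omega>}"
    using cdf_distr_props(7)[OF assms(1,2)] cdf_distr_props(7)[OF assms(1,3)] by simp
  then have "max (cdf (distr M borel Y) s - cdf (distr M borel X) t) 0 \<le> prob {\<omega>\<in>space M. Y \<omega> \<le> s \<and> t < X \<omega>}"
    by simp
  then show ?thesis by (simp add: emeasure_eq_measure ennreal_leI)
qed

lemma PA:
  assumes "prob_space M" and [measurable]: "X \<in> borel_measurable M" "Y \<in> borel_measurable M"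
  shows "(\<integral>\<^sup>+u. ennreal (max (quantile M X u - quantile M Y u - a) 0) \<partial>L01)
    \<le> (\<integral>\<^sup>+\<omega>. ennreal (max (X \<omega> - Y \<omega> - a) 0) \<partial>M)"
proof -
  note QX[measurable] = quantile_measurable[OF assms(1,2)]
  note QY[measurable] = quantile_measurable[OF assms(1,3)]
  define Fx where "Fx = cdf (distr M borel X)"
  define Fy where "Fy = cdf (distr M borel Y)"
  interpret P1: pair_sigma_finite L01 lborel
    unfolding pair_sigma_finite_def using L01_sigma_finite sigma_finite_lborel by simp
  interpret P2: pair_sigma_finite M lborel
    unfolding pair_sigma_finite_def using prob_space_imp_sigma_finite[OF assms(1)] sigma_finite_lborel by simp
  have "(\<integral>\<^sup>+u. ennreal (max (quantile M X u - quantile M Y u - a) 0) \<partial>L01)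
     = (\<integral>\<^sup>+u. (\<integral>\<^sup>+t. (if quantile M Y u \<le> t - a \<and> t < quantile M X u then 1 else 0) \<partial>lborel) \<partial>L01)"
    by (intro nn_integral_cong) (rule posdiff_integral)
  also have "\<dots> = (\<integral>\<^sup>+t. (\<integral>\<^sup>+u. (if quantile M Y u \<le> t - a \<and> t < quantile M X u then 1 else 0) \<partial>L01) \<partial>lborel)"
    by (rule P1.Fubini'[symmetric]) measurable
  also have "\<dots> = (\<integral>\<^sup>+t. ennreal (max (Fy (t - a) - Fx t) 0) \<partial>lborel)"
  proof (intro nn_integral_cong)
    fix t :: real
    have "(\<integral>\<^sup>+u. (if quantile M Y u \<le> t - a \<and> t < quantile M X u then 1 else 0) \<partial>L01)
      = (\<integral>\<^sup>+u. indicator {Fx t<..Fy (t - a)} u \<partial>L01)"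
    proof (intro nn_integral_cong)
      fix u assume "u \<in> space L01"
      then have u: "0 < u" "u < 1" by auto
      show "(if quantile M Y u \<le> t - a \<and> t < quantile M X u then 1 else 0) = (indicator {Fx t<..Fy (t - a)} u :: ennreal)"
        using quantile_le_iff[OF assms(1,2) u, of t] quantile_le_iff[OF assms(1,3) u, of "t - a"]
        by (auto simp: indicator_def Fx_def Fy_def not_le)
    qed
    also have "\<dots> = (\<integral>\<^sup>+u. indicator {Fx t<..Fy (t - a)} u * indicator {0<..<1} u \<partial>lborel)"
      by (rule nn_integral_restrict_space) simp
    also have "\<dots> = (\<integral>\<^sup>+u. indicator ({Fx t<..Fy (t - a)} \<inter> {0<..<1}) u \<partial>lborel)"
      by (intro nn_integral_cong) (simp add: indicator_inter_arith)
    also have "\<dots> = emeasure lborel ({Fx t<..Fy (t - a)} \<inter> {0<..<1})"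
      by (rule nn_integral_indicator) simp
    also have "\<dots> = ennreal (max (Fy (t - a) - Fx t) 0)"
      by (rule emeasure_Ioc_cap01) (auto simp: Fx_def Fy_def cdf_distr_props(5,6)[OF assms(1)])
    finally show "(\<integral>\<^sup>+u. (if quantile M Y u \<le> t - a \<and> t < quantile M X u then 1 else 0) \<partial>L01)
      = ennreal (max (Fy (t - a) - Fx t) 0)" .
  qed
  also have "\<dots> \<le> (\<integral>\<^sup>+t. (\<integral>\<^sup>+\<omega>. (if Y \<omega> \<le> t - a \<and> t < X \<omega> then 1 else 0) \<partial>M) \<partial>lborel)"
  proof (intro nn_integral_mono)
    fix t :: real
    have "(\<integral>\<^sup>+\<omega>. (if Y \<omega> \<le> t - a \<and> t < X \<omega> then 1 else 0) \<partial>M)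
       = (\<integral>\<^sup>+\<omega>. indicator {\<omega>\<in>space M. Y \<omega> \<le> t - a \<and> t < X \<omega>} \<omega> \<partial>M)"
      by (intro nn_integral_cong) (auto simp: indicator_def)
    also have "\<dots> = emeasure M {\<omega>\<in>space M. Y \<omega> \<le> t - a \<and> t < X \<omega>}"
      by (intro nn_integral_indicator) measurable
    finally show "ennreal (max (Fy (t - a) - Fx t) 0) \<le> (\<integral>\<^sup>+\<omega>. (if Y \<omega> \<le> t - a \<and> t < X \<omega> then 1 else 0) \<partial>M)"
      using prob_lower[OF assms, of "t - a" t] by (simp add: Fx_def Fy_def)
  qed
  also have "\<dots> = (\<integral>\<^sup>+\<omega>. (\<integral>\<^sup>+t. (if Y \<omega> \<le> t - a \<and> t < X \<omega> then 1 else 0) \<partial>lborel) \<partial>M)"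
    by (rule P2.Fubini') measurable
  also have "\<dots> = (\<integral>\<^sup>+\<omega>. ennreal (max (X \<omega> - Y \<omega> - a) 0) \<partial>M)"
    by (intro nn_integral_cong) (rule posdiff_integral[symmetric])
  finally show ?thesis .
qed



definition kern :: "real \<Rightarrow> real \<Rightarrow> real" where
  "kern r a = (if 0 < a then r * (r - 1) * a powr (r - 2) else 0)"

lemma kern_nonneg: "1 \<le> r \<Longrightarrow> 0 \<le> kern r a"
  by (simp add: kern_def)

lemma kern_measurable[measurable]: "kern r \<in> borel_measurable borel"
  unfolding kern_def by measurable

lemma kern_has_integral:
  fixes d r :: real
  assumes r: "1 < r" and d: "0 \<le> d"
  shows "((\<lambda>a. r * (r - 1) * a powr (r - 2) * (d - a)) has_integral d powr r) {0..d}"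
proof -
  define F where "F a = r * d * a powr (r - 1) - (r - 1) * a powr r" for a :: real
  have HI: "((\<lambda>a. r * (r - 1) * a powr (r - 2) * (d - a)) has_integral (F d - F 0)) {0..d}"
  proof (rule fundamental_theorem_of_calculus_interior)
    show "0 \<le> d" by fact
    show "continuous_on {0..d} F" unfolding F_def using r
      by (intro continuous_intros continuous_on_powr') auto
    fix a assume "a \<in> {0<..<d}"
    then have a: "0 < a" by simp
    have "(F has_real_derivative (r * d * ((r - 1) * a powr (r - 1 - 1)) - (r - 1) * (r * a powr (r - 1)))) (at a)"
      unfolding F_def
      by (intro DERIV_diff DERIV_cmult has_real_derivative_powr a)
    moreover have "a powr (r - 1) = a powr (r - 2) * a"
    proof -
      have "a powr (r - 1) = a powr ((r - 2) + 1)" by simp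
      also have "\<dots> = a powr (r - 2) * a powr 1" by (rule powr_add)
      finally show ?thesis using a by simp
    qed
    ultimately have "(F has_real_derivative (r * (r - 1) * a powr (r - 2) * (d - a))) (at a)"
      by (simp add: algebra_simps)
    then show "(F has_vector_derivative (r * (r - 1) * a powr (r - 2) * (d - a))) (at a)"
      by (simp add: has_real_derivative_iff_has_vector_derivative)
  qed
  moreover have "d * d powr (r - 1) = d powr r"
  proof (cases "d = 0")
    case False
    have "d powr r = d powr ((r - 1) + 1)" by simp
    also have "\<dots> = d powr (r - 1) * d powr 1" by (rule powr_add)
    finally show ?thesis using False d by simp
  qed simp
  moreover have "F d - F 0 = r * (d * d powr (r - 1)) - (r - 1) * d powr r"
    using r by (simp add: F_def)
  ultimately have "F d - F 0 = d powr r" by (simp add: algebra_simps)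
  then show ?thesis using HI by simp
qed

lemma kern_repr0:
  fixes d r :: real
  assumes r: "1 < r" and d: "0 \<le> d"
  shows "(\<integral>\<^sup>+a. ennreal (kern r a) * (ennreal (max (d - a) 0) + ennreal (max (- d - a) 0)) \<partial>lborel)
    = ennreal (\<bar>d\<bar> powr r)"
proof -
  have "(\<integral>\<^sup>+a. ennreal (kern r a) * (ennreal (max (d - a) 0) + ennreal (max (- d - a) 0)) \<partial>lborel)
     = (\<integral>\<^sup>+a. ennreal (r * (r - 1) * a powr (r - 2) * (d - a)) * indicator {0..d} a \<partial>lborel)"
  proof (intro nn_integral_cong)
    fix a :: real
    consider "a \<le> 0" | "0 < a" "a \<le> d" | "d < a" by linarith
    then show "ennreal (kern r a) * (ennreal (max (d - a) 0) + ennreal (max (- d - a) 0))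
      = ennreal (r * (r - 1) * a powr (r - 2) * (d - a)) * indicator {0..d} a"
    proof cases
      case 1
      then show ?thesis using d by (auto simp: kern_def indicator_def)
    next
      case 2
      then have "max (- d - a) 0 = 0" "max (d - a) 0 = d - a" using d by auto
      then show ?thesis using 2 r by (simp add: kern_def indicator_def ennreal_mult[symmetric])
    next
      case 3
      then have "max (- d - a) 0 = 0" "max (d - a) 0 = 0" using d by auto
      then show ?thesis using 3 by (simp add: indicator_def)
    qed
  qed
  also have "\<dots> = ennreal (d powr r)"
    by (rule nn_integral_has_integral_lebesgue'[OF _ kern_has_integral[OF r d]]) (use r in auto)
  finally show ?thesis using d by simp
qed

lemma kern_repr:
  fixes x y r :: real
  assumes r: "1 < r"
  shows "ennreal (\<bar>x - y\<bar> powr r)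
    = (\<integral>\<^sup>+a. ennreal (kern r a) * (ennreal (max (x - y - a) 0) + ennreal (max (y - x - a) 0)) \<partial>lborel)"
proof (cases "0 \<le> x - y")
  case True
  show ?thesis using kern_repr0[OF r True] by simp
next
  case False
  then have "0 \<le> y - x" by simp
  from kern_repr0[OF r this] show ?thesis
    by (simp add: add.commute abs_minus_commute)
qed



lemma abs_split_enn: "ennreal \<bar>x - y\<bar> = ennreal (max (x - y - 0) 0) + ennreal (max (y - x - 0) 0)"
  by (cases "x \<le> y") (auto simp: max_def)

lemma W_bound:
  assumes "prob_space M" and [measurable]: "X \<in> borel_measurable M" "Y \<in> borel_measurable M"
    and r: "1 \<le> r"
  shows "(\<integral>\<^sup>+u. ennreal (\<bar>quantile M X u - quantile M Y u\<bar> powr r) \<partial>L01)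
    \<le> (\<integral>\<^sup>+\<omega>. ennreal (\<bar>X \<omega> - Y \<omega>\<bar> powr r) \<partial>M)"
proof -
  note QX[measurable] = quantile_measurable[OF assms(1,2)]
  note QY[measurable] = quantile_measurable[OF assms(1,3)]
  interpret P1: pair_sigma_finite L01 lborel
    unfolding pair_sigma_finite_def using L01_sigma_finite sigma_finite_lborel by simp
  interpret P2: pair_sigma_finite M lborel
    unfolding pair_sigma_finite_def using prob_space_imp_sigma_finite[OF assms(1)] sigma_finite_lborel by simp
  show ?thesis
  proof (cases "r = 1")
    case True
    have "(\<integral>\<^sup>+u. ennreal (\<bar>quantile M X u - quantile M Y u\<bar> powr r) \<partial>L01)
      = (\<integral>\<^sup>+u. ennreal (max (quantile M X u - quantile M Y u - 0) 0) + ennreal (max (quantile M Y u - quantile M X u - 0) 0) \<partial>L01)"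
      using True by (intro nn_integral_cong) (simp only: abs_split_enn powr_one abs_ge_zero)
    also have "\<dots> = (\<integral>\<^sup>+u. ennreal (max (quantile M X u - quantile M Y u - 0) 0) \<partial>L01) + (\<integral>\<^sup>+u. ennreal (max (quantile M Y u - quantile M X u - 0) 0) \<partial>L01)"
      by (rule nn_integral_add) measurable
    also have "\<dots> \<le> (\<integral>\<^sup>+\<omega>. ennreal (max (X \<omega> - Y \<omega> - 0) 0) \<partial>M) + (\<integral>\<^sup>+\<omega>. ennreal (max (Y \<omega> - X \<omega> - 0) 0) \<partial>M)"
      by (intro add_mono PA assms)
    also have "\<dots> = (\<integral>\<^sup>+\<omega>. ennreal (max (X \<omega> - Y \<omega> - 0) 0) + ennreal (max (Y \<omega> - X \<omega> - 0) 0) \<partial>M)"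
      by (rule nn_integral_add[symmetric]) measurable
    also have "\<dots> = (\<integral>\<^sup>+\<omega>. ennreal (\<bar>X \<omega> - Y \<omega>\<bar> powr r) \<partial>M)"
      using True by (intro nn_integral_cong) (simp only: abs_split_enn powr_one abs_ge_zero)
    finally show ?thesis .
  next
    case False
    then have r1: "1 < r" using r by simp
    have "(\<integral>\<^sup>+u. ennreal (\<bar>quantile M X u - quantile M Y u\<bar> powr r) \<partial>L01)
      = (\<integral>\<^sup>+u. (\<integral>\<^sup>+a. ennreal (kern r a) * (ennreal (max (quantile M X u - quantile M Y u - a) 0) + ennreal (max (quantile M Y u - quantile M X u - a) 0)) \<partial>lborel) \<partial>L01)"
      by (intro nn_integral_cong kern_repr r1)
    also have "\<dots> = (\<integral>\<^sup>+a. (\<integral>\<^sup>+u. ennreal (kern r a) * (ennreal (max (quantile M X u - quantile M Y u - a) 0) + ennreal (max (quantile M Y u - quantile M X u - a) 0)) \<partial>L01) \<partial>lborel)"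
      by (rule P1.Fubini'[symmetric]) measurable
    also have "\<dots> = (\<integral>\<^sup>+a. ennreal (kern r a) * ((\<integral>\<^sup>+u. ennreal (max (quantile M X u - quantile M Y u - a) 0) \<partial>L01) + (\<integral>\<^sup>+u. ennreal (max (quantile M Y u - quantile M X u - a) 0) \<partial>L01)) \<partial>lborel)"
      by (intro nn_integral_cong) (simp add: nn_integral_cmult nn_integral_add)
    also have "\<dots> \<le> (\<integral>\<^sup>+a. ennreal (kern r a) * ((\<integral>\<^sup>+\<omega>. ennreal (max (X \<omega> - Y \<omega> - a) 0) \<partial>M) + (\<integral>\<^sup>+\<omega>. ennreal (max (Y \<omega> - X \<omega> - a) 0) \<partial>M)) \<partial>lborel)"
      by (intro nn_integral_mono mult_left_mono add_mono PA assms) simp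
    also have "\<dots> = (\<integral>\<^sup>+a. (\<integral>\<^sup>+\<omega>. ennreal (kern r a) * (ennreal (max (X \<omega> - Y \<omega> - a) 0) + ennreal (max (Y \<omega> - X \<omega> - a) 0)) \<partial>M) \<partial>lborel)"
      by (intro nn_integral_cong) (simp add: nn_integral_cmult nn_integral_add)
    also have "\<dots> = (\<integral>\<^sup>+\<omega>. (\<integral>\<^sup>+a. ennreal (kern r a) * (ennreal (max (X \<omega> - Y \<omega> - a) 0) + ennreal (max (Y \<omega> - X \<omega> - a) 0)) \<partial>lborel) \<partial>M)"
      by (rule P2.Fubini') measurable
    also have "\<dots> = (\<integral>\<^sup>+\<omega>. ennreal (\<bar>X \<omega> - Y \<omega>\<bar> powr r) \<partial>M)"
      by (intro nn_integral_cong kern_repr[symmetric] r1)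
    finally show ?thesis .
  qed
qed



lemma Lnorm_fin: "0 \<le> p \<Longrightarrow> Lnorm M (ennreal p) f = epowr (\<integral>\<^sup>+ x. epowr (f x) p \<partial>M) (1 / p)"
  by (simp add: Lnorm_def)

lemma abs_max0_le: "\<bar>max (a::real) 0 - max b 0\<bar> \<le> \<bar>a - b\<bar>"
  by (simp add: max_def)

theorem proposition3p1:
  fixes M :: "'a measure" and Z :: "'a \<Rightarrow> 'd::euclidean_space"
    and fZ :: "'d \<Rightarrow> ennreal" and V U :: "'d \<Rightarrow> real"
    and m :: "real measure" and fm :: "real \<Rightarrow> real"
    and p r q :: real
  assumes "prob_space M"
    and "distributed M lborel Z fZ"
    and "V \<in> borel_measurable borel" and "U \<in> borel_measurable borel"
    and "fm \<in> borel_measurable borel" and "\<And>u. fm u \<ge> 0"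
    and "m = density (restrict_space lborel {0<..<1}) (\<lambda>u. ennreal (fm u))"
    and "prob_space m"
    and "integrable m (quantile M (\<lambda>\<omega>. max (V (Z \<omega>)) 0))"
    and "integrable m (quantile M (\<lambda>\<omega>. max (U (Z \<omega>)) 0))"
    and "1 \<le> r" and "1 \<le> q" and "p = r * q"
  shows "ennreal \<bar>rho m M (\<lambda>\<omega>. max (V (Z \<omega>)) 0) - rho m M (\<lambda>\<omega>. max (U (Z \<omega>)) 0)\<bar>
     \<le> Lnorm lborel (ennreal p) (\<lambda>x. ennreal \<bar>V x - U x\<bar>)
       * epowr (Lnorm lborel (conj_exp q) fZ) (1 / r)
       * Lnorm (restrict_space lborel {0<..<1}) (conj_exp r) (\<lambda>u. ennreal (fm u))"
proof -
  note PM = assms(1)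
  note dist = assms(2)
  have Zm[measurable]: "Z \<in> measurable M borel"
    using distributed_measurable[OF dist] by simp
  have fZm[measurable]: "fZ \<in> borel_measurable borel"
    using distributed_borel_measurable[OF dist] by simp
  have Vm[measurable]: "V \<in> borel_measurable borel" and Um[measurable]: "U \<in> borel_measurable borel"
    using assms(3,4) by auto
  have fmm[measurable]: "fm \<in> borel_measurable borel" by fact
  define X where "X = (\<lambda>\<omega>. max (V (Z \<omega>)) 0)"
  define Y where "Y = (\<lambda>\<omega>. max (U (Z \<omega>)) 0)"
  have Xm[measurable]: "X \<in> borel_measurable M" unfolding X_def by measurable
  have Ym[measurable]: "Y \<in> borel_measurable M" unfolding Y_def by measurable
  define Qx where "Qx = quantile M X"
  define Qy where "Qy = quantile M Y"
  have QXm[measurable]: "Qx \<in> borel_measurable L01" unfolding Qx_def by (rule quantile_measurable[OF PM Xm])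
  have QYm[measurable]: "Qy \<in> borel_measurable L01" unfolding Qy_def by (rule quantile_measurable[OF PM Ym])
  have fmL[measurable]: "(\<lambda>u. ennreal (fm u)) \<in> borel_measurable L01"
    by (intro measurable_restrict_space1) measurable
  have r0: "0 < r" using assms(11) by simp
  have q0: "0 < q" using assms(12) by simp
  have p0: "0 < p" using assms(11-13) by simp
  have iX: "integrable m Qx" and iY: "integrable m Qy"
    using assms(9,10) by (simp_all add: Qx_def Qy_def X_def Y_def)
  define E where "E = (\<integral>\<^sup>+\<omega>. ennreal (\<bar>X \<omega> - Y \<omega>\<bar> powr r) \<partial>M)"
  define I where "I = (\<integral>\<^sup>+z. ennreal (\<bar>V z - U z\<bar> powr p) \<partial>(lborel :: 'd measure))"
  define N where "N = Lnorm lborel (conj_exp q) fZ"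
  define Lfm where "Lfm = Lnorm L01 (conj_exp r) (\<lambda>u. ennreal (fm u))"
  have LHS: "ennreal \<bar>rho m M X - rho m M Y\<bar> \<le> epowr E (1/r) * Lfm"
  proof -
    have "rho m M X - rho m M Y = (\<integral>u. Qx u - Qy u \<partial>m)"
      unfolding rho_def Qx_def[symmetric] Qy_def[symmetric] using iX iY by simp
    then have "\<bar>rho m M X - rho m M Y\<bar> \<le> (\<integral>u. \<bar>Qx u - Qy u\<bar> \<partial>m)"
      by simp
    then have "ennreal \<bar>rho m M X - rho m M Y\<bar> \<le> ennreal (\<integral>u. \<bar>Qx u - Qy u\<bar> \<partial>m)"
      by (rule ennreal_leI)
    also have "\<dots> = (\<integral>\<^sup>+u. ennreal \<bar>Qx u - Qy u\<bar> \<partial>m)"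
      by (rule nn_integral_eq_integral[symmetric]) (use iX iY in auto)
    also have "\<dots> = (\<integral>\<^sup>+u. ennreal (fm u) * ennreal \<bar>Qx u - Qy u\<bar> \<partial>L01)"
      unfolding assms(7) by (rule nn_integral_density) measurable
    also have "\<dots> = (\<integral>\<^sup>+u. ennreal \<bar>Qx u - Qy u\<bar> * ennreal (fm u) \<partial>L01)"
      by (simp add: mult.commute)
    also have "\<dots> \<le> Lnorm L01 (ennreal r) (\<lambda>u. ennreal \<bar>Qx u - Qy u\<bar>) * Lfm"
      unfolding Lfm_def by (rule holder_Lnorm) (use assms(11) in measurable)
    also have "Lnorm L01 (ennreal r) (\<lambda>u. ennreal \<bar>Qx u - Qy u\<bar>)
       = epowr (\<integral>\<^sup>+u. ennreal (\<bar>Qx u - Qy u\<bar> powr r) \<partial>L01) (1/r)"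
      using r0 by (simp add: Lnorm_fin epowr_ennreal)
    also have "\<dots> \<le> epowr E (1/r)"
      unfolding E_def Qx_def Qy_def
      by (intro epowr_mono W_bound PM Xm Ym assms(11)) (use r0 in simp)
    finally show ?thesis by (simp add: mult_right_mono)
  qed
  have EB: "E \<le> epowr I (1/q) * N"
  proof -
    have "E = (\<integral>\<^sup>+z. fZ z * ennreal (\<bar>max (V z) 0 - max (U z) 0\<bar> powr r) \<partial>lborel)"
      unfolding E_def X_def Y_def
      by (rule distributed_nn_integral[OF dist, symmetric]) measurable
    also have "\<dots> \<le> (\<integral>\<^sup>+z. ennreal (\<bar>V z - U z\<bar> powr r) * fZ z \<partial>lborel)"
      by (intro nn_integral_mono) (simp add: mult.commute mult_left_mono ennreal_leI powr_mono2 abs_max0_le r0 less_imp_le)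
    also have "\<dots> \<le> Lnorm lborel (ennreal q) (\<lambda>z. ennreal (\<bar>V z - U z\<bar> powr r)) * N"
      unfolding N_def by (rule holder_Lnorm) (use assms(12) in measurable)
    also have "Lnorm lborel (ennreal q) (\<lambda>z. ennreal (\<bar>V z - U z\<bar> powr r)) = epowr I (1/q)"
      using q0 by (simp add: Lnorm_fin epowr_ennreal I_def powr_powr assms(13))
    finally show ?thesis .
  qed
  have "epowr E (1/r) \<le> epowr (epowr I (1/q) * N) (1/r)"
    by (rule epowr_mono[OF _ EB]) (use r0 in simp)
  also have "\<dots> = epowr I (1/q * (1/r)) * epowr N (1/r)"
    using r0 q0 by (simp add: epowr_mult epowr_epowr)
  also have "epowr I (1/q * (1/r)) = Lnorm lborel (ennreal p) (\<lambda>x. ennreal \<bar>V x - U x\<bar>)"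
    using p0 by (simp add: Lnorm_fin epowr_ennreal I_def assms(13) mult.commute)
  finally have "epowr E (1/r) \<le> Lnorm lborel (ennreal p) (\<lambda>x. ennreal \<bar>V x - U x\<bar>) * epowr N (1/r)" .
  then have "epowr E (1/r) * Lfm \<le> Lnorm lborel (ennreal p) (\<lambda>x. ennreal \<bar>V x - U x\<bar>) * epowr N (1/r) * Lfm"
    by (rule mult_right_mono) simp
  with LHS show ?thesis unfolding X_def Y_def N_def Lfm_def by simp
qed


end
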